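(* Let $\Xi$ be the points of a rate-1 Poisson point process in an $L\times L$ square. Fix $d_0>0$ and an integer $n\ge1$. The probability that there exists a sequence $\xi_0,\xi_1,\dots,\xi_n$ of distinct points of $\Xi$ with \[ d_0\ge d(\xi_0,\xi_1)\ge d(\xi_1,\xi_2)\ge\dots\ge d(\xi_{n-1},\xi_n) \] is at most $\dfrac{L^2\pi^n d_0^{2n}}{n!}$.
   Context: $d$ denotes Euclidean distance in $\mathbb{R}^2$. *)

theory Defs
  imports "HOL-Probability.Probability"
begin

text \<open>Rate-1 Poisson point process on the square [0,L] x [0,L] in R^2 (points of type real \<times> real,
  whose product metric is the Euclidean one).  Standard construction: the number of points
  N is Poisson distributed with mean L^2 (= area), and the points are X 0, ..., X (N-1),
  where X 0, X 1, ... are i.i.d. uniform on the square, independent of N.\<close>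

definition square :: "real \<Rightarrow> (real \<times> real) set" where
  "square L = {0..L} \<times> {0..L}"

definition PPP :: "real \<Rightarrow> (nat \<times> (nat \<Rightarrow> real \<times> real)) measure" where
  "PPP L = measure_pmf (poisson_pmf (L^2)) \<Otimes>\<^sub>M
           (\<Pi>\<^sub>M i\<in>(UNIV::nat set). uniform_measure lborel (square L))"

definition PPP_points :: "nat \<times> (nat \<Rightarrow> real \<times> real) \<Rightarrow> (real \<times> real) set" where
  "PPP_points \<omega> = snd \<omega> ` {..<fst \<omega>}"

definition decr_chain_event ::
    "real \<Rightarrow> real \<Rightarrow> nat \<Rightarrow> (nat \<times> (nat \<Rightarrow> real \<times> real)) set" where
  "decr_chain_event L d0 n = {\<omega> \<in> space (PPP L).
      \<exists>\<xi> :: nat \<Rightarrow> real \<times> real.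
         (\<forall>j\<le>n. \<xi> j \<in> PPP_points \<omega>) \<and> inj_on \<xi> {..n} \<and>
         dist (\<xi> 0) (\<xi> 1) \<le> d0 \<and>
         (\<forall>j. 1 \<le> j \<and> j < n \<longrightarrow> dist (\<xi> j) (\<xi> (j+1)) \<le> dist (\<xi> (j-1)) (\<xi> j))}"

end

theory Submission
  imports Defs
begin


lemma ballv: "r \<ge> 0 \<Longrightarrow> emeasure lborel (cball (c::real\<times>real) r) = ennreal (pi * r^2)"
  by (simp add: emeasure_cball unit_ball_vol_2 power2_eq_square)

lemma cball_dist_sq:
  fixes p :: "real\<times>real"
  assumes "R \<ge> 0"
  shows "emeasure lborel (cball p R \<inter> {x. (dist p x)^2 \<le> t}) = ennreal (if t < 0 then 0 else pi * min (R^2) t)"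
proof (cases "t < 0")
  case True
  then have "cball p R \<inter> {x. (dist p x)^2 \<le> t} = {}"
  proof -
    have "\<not> (dist p x)^2 \<le> t" for x using True zero_le_power2[of "dist p x"] by linarith
    thus ?thesis by auto
  qed
  then show ?thesis using True by simp
next
  case False
  have h: "\<And>x::real. 0 \<le> x \<Longrightarrow> x \<le> sqrt t \<Longrightarrow> x^2 \<le> t"
    using False by (metis power_mono real_sqrt_pow2 not_less)
  have "cball p R \<inter> {x. (dist p x)^2 \<le> t} = cball p (min R (sqrt t))"
    using False assms h by (auto simp: real_le_rsqrt real_sqrt_le_iff' mem_cball)
  moreover have "(min R (sqrt t))^2 = min (R^2) t"
    using False assms h[of R] by (cases "R \<le> sqrt t") (auto simp: min_def real_sqrt_le_iff' real_le_rsqrt)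
  ultimately show ?thesis using False assms by (simp add: ballv)
qed

lemma radial_distr:
  fixes p :: "real\<times>real"
  assumes R: "R \<ge> 0"
  shows "distr (density lborel (indicator (cball p R))) borel (\<lambda>x. (dist p x)^2)
       = density lborel (\<lambda>s. ennreal pi * indicator {0..R^2} s)" (is "?M1 = ?M2")
proof (rule cdf_unique')
  have e1: "emeasure ?M1 {..t} = ennreal (if t < 0 then 0 else pi * min (R^2) t)" for t
  proof -
    have "emeasure ?M1 {..t} = emeasure (density lborel (indicator (cball p R))) ((\<lambda>x. (dist p x)^2) -` {..t})"
      by (subst emeasure_distr) auto
    also have "\<dots> = emeasure lborel (cball p R \<inter> {x. (dist p x)^2 \<le> t})"
      by (subst emeasure_restricted) (auto simp: Int_commute vimage_def)
    finally show ?thesis using cball_dist_sq[OF R] by simp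
  qed
  have e2: "emeasure ?M2 {..t} = ennreal (if t < 0 then 0 else pi * min (R^2) t)" for t
  proof -
    have "emeasure ?M2 {..t} = (\<integral>\<^sup>+s. ennreal pi * indicator ({0..R^2} \<inter> {..t}) s \<partial>lborel)"
      by (subst emeasure_density) (auto intro!: nn_integral_cong simp: indicator_def)
    also have "\<dots> = ennreal pi * emeasure lborel ({0..R^2} \<inter> {..t})"
      by (subst nn_integral_cmult_indicator) auto
    also have "{0..R^2} \<inter> {..t} = (if t < 0 then {} else {0..min (R^2) t})" by auto
    finally show ?thesis using R by (auto simp: ennreal_mult')
  qed
  show "finite_borel_measure ?M1"
  proof (rule finite_borel_measure.intro)
    show "finite_borel_measure_axioms ?M1" by unfold_locales simp
    show "finite_measure ?M1"
    proof (rule finite_measureI)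
    have "emeasure ?M1 (space ?M1) = emeasure lborel (cball p R)"
      by (subst emeasure_distr) (auto simp: emeasure_restricted)
    then show "emeasure ?M1 (space ?M1) \<noteq> \<infinity>" using R by (simp add: ballv)
  qed
  qed
  show "finite_borel_measure ?M2"
  proof (rule finite_borel_measure.intro)
    show "finite_borel_measure_axioms ?M2" by unfold_locales simp
    show "finite_measure ?M2"
    proof (rule finite_measureI)
    have "emeasure ?M2 (space ?M2) = (\<integral>\<^sup>+s. ennreal pi * indicator {0..R^2} s \<partial>lborel)"
      by (subst emeasure_density) auto
    also have "\<dots> = ennreal pi * emeasure lborel {0..R^2}"
      by (subst nn_integral_cmult_indicator) auto
    finally show "emeasure ?M2 (space ?M2) \<noteq> \<infinity>" using R by (simp add: ennreal_mult_eq_top_iff)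
  qed
  qed
  show "cdf ?M1 = cdf ?M2"
    by (rule ext) (simp add: cdf_def measure_def e1 e2)
qed
lemma pow_int:
  assumes "A \<ge> 0"
  shows "(\<integral>\<^sup>+s. ennreal (pi * s^m) * indicator {0..A} s \<partial>lborel) = ennreal (pi * A^(Suc m) / Suc m)"
proof -
  have d: "((\<lambda>s. pi * s^(Suc m) / Suc m) has_real_derivative pi * x^m) (at x)" for x
  proof -
    have "((\<lambda>s. s^(Suc m)) has_real_derivative real (Suc m) * x^m) (at x)"
      using DERIV_pow[of "Suc m" x] by simp
    from DERIV_cdivide[OF DERIV_cmult[OF this, of pi], of "real (Suc m)"]
    show ?thesis by (simp del: of_nat_Suc)
  qed
  have "((\<lambda>s. pi * s^m) has_integral (pi * A^(Suc m) / Suc m - pi * 0^(Suc m) / Suc m)) {0..A}"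
    apply (rule fundamental_theorem_of_calculus)
    using assms apply simp
    using d by (auto simp: has_real_derivative_iff_has_vector_derivative[symmetric] intro: has_field_derivative_at_within)
  hence "((\<lambda>s. pi * s^m) has_integral (pi * A^(Suc m) / Suc m)) {0..A}" by simp
  from nn_integral_has_integral_lebesgue'[OF _ this] show ?thesis using assms by simp
qed
lemma radial_int:
  fixes p :: "real\<times>real"
  assumes R: "R \<ge> 0"
  shows "(\<integral>\<^sup>+x. indicator (cball p R) x * ennreal (dist p x ^ (2*m)) \<partial>lborel) = ennreal (pi * R^(2*m+2) / Suc m)"
proof -
  have "(\<integral>\<^sup>+x. indicator (cball p R) x * ennreal (dist p x ^ (2*m)) \<partial>lborel)
      = (\<integral>\<^sup>+x. ennreal (((dist p x)^2)^m) \<partial>density lborel (indicator (cball p R)))"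
    by (subst nn_integral_density) (auto simp: power_mult intro!: borel_measurable_indicator borel_closed)
  also have "\<dots> = (\<integral>\<^sup>+s. ennreal (s^m) \<partial>distr (density lborel (indicator (cball p R))) borel (\<lambda>x. (dist p x)^2))"
    by (subst nn_integral_distr) auto
  also have "\<dots> = (\<integral>\<^sup>+s. ennreal (s^m) \<partial>density lborel (\<lambda>s. ennreal pi * indicator {0..R^2} s))"
    by (simp add: radial_distr[OF R])
  also have "\<dots> = (\<integral>\<^sup>+s. ennreal (pi * s^m) * indicator {0..R^2} s \<partial>lborel)"
    by (subst nn_integral_density) (auto intro!: nn_integral_cong simp: indicator_def ennreal_mult')
  also have "\<dots> = ennreal (pi * (R^2)^(Suc m) / Suc m)"
    by (rule pow_int) simp
  also have "(R^2)^(Suc m) = R^(2*m+2)"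
    unfolding power_mult[symmetric] by simp
  finally show ?thesis .
qed


definition UU :: "real \<Rightarrow> (real\<times>real) measure" where
  "UU L = uniform_measure lborel (square L)"

lemma sq_meas: "L \<ge> 0 \<Longrightarrow> emeasure lborel (square L) = ennreal (L^2)"
proof -
  assume L: "L \<ge> 0"
  have "square L = cbox (0,0) (L,L)" unfolding square_def by (auto simp: cbox_def Basis_prod_def inner_prod_def)
  thus ?thesis using L by (simp add: emeasure_lborel_cbox_eq Basis_prod_def power2_eq_square)
qed

lemma sq_sets[measurable]: "square L \<in> sets lborel"
  unfolding square_def by (simp add: borel_closed closed_Times)

lemma sq_sets'[measurable]: "square L \<in> sets borel"
  unfolding square_def by (simp add: borel_closed closed_Times)

lemma cball_sets[measurable]: "cball (p::real\<times>real) r \<in> sets borel"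
  by (simp add: borel_closed)

lemma UU_prob: "L > 0 \<Longrightarrow> prob_space (UU L)"
  unfolding UU_def by (rule prob_space_uniform_measure) (auto simp: sq_meas)

lemma space_UU[simp]: "space (UU L) = UNIV" and sets_UU[simp, measurable_cong]: "sets (UU L) = sets borel"
  by (simp_all add: UU_def)

lemma PiM_split_emeasure:
  assumes L: "L > 0" and i: "i \<in> I" and A: "A \<in> sets (PiM I (\<lambda>_. UU L))"
  shows "emeasure (PiM I (\<lambda>_. UU L)) A =
     (\<integral>\<^sup>+x. emeasure (PiM (I - {i}) (\<lambda>_. UU L)) {X \<in> space (PiM (I - {i}) (\<lambda>_. UU L)). X(i:=x) \<in> A} \<partial>UU L)"
proof -
  let ?P' = "PiM (I - {i}) (\<lambda>_. UU L)"
  let ?f = "\<lambda>(x, X). X(i := x)"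
  interpret P': prob_space ?P' by (intro prob_space_PiM UU_prob L)
  have ins: "insert i (I - {i}) = I" using i by auto
  have eq: "distr (UU L \<Otimes>\<^sub>M ?P') (PiM I (\<lambda>_. UU L)) ?f = PiM I (\<lambda>_. UU L)"
    using distr_pair_PiM_eq_PiM[of "I - {i}" "\<lambda>_. UU L" i] UU_prob[OF L] by (simp add: insert_absorb[OF i])
  have mf: "?f \<in> measurable (UU L \<Otimes>\<^sub>M ?P') (PiM I (\<lambda>_. UU L))"
  proof -
    have "(\<lambda>z. (snd z)(i := fst z)) \<in> measurable (UU L \<Otimes>\<^sub>M ?P') (PiM I (\<lambda>_. UU L))"
      by (rule measurable_fun_upd[where J="I - {i}"]) (use i in auto)
    thus ?thesis by (simp add: case_prod_beta)
  qed
  have "emeasure (PiM I (\<lambda>_. UU L)) A = emeasure (distr (UU L \<Otimes>\<^sub>M ?P') (PiM I (\<lambda>_. UU L)) ?f) A"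
    by (simp add: eq)
  also have "\<dots> = emeasure (UU L \<Otimes>\<^sub>M ?P') (?f -` A \<inter> space (UU L \<Otimes>\<^sub>M ?P'))"
    by (rule emeasure_distr[OF mf A])
  also have "\<dots> = (\<integral>\<^sup>+x. emeasure ?P' (Pair x -` (?f -` A \<inter> space (UU L \<Otimes>\<^sub>M ?P'))) \<partial>UU L)"
    by (rule P'.emeasure_pair_measure_alt) (rule measurable_sets[OF mf A])
  also have "\<dots> = (\<integral>\<^sup>+x. emeasure ?P' {X \<in> space ?P'. X(i:=x) \<in> A} \<partial>UU L)"
    by (intro nn_integral_cong arg_cong2[where f=emeasure] refl) (auto simp: space_pair_measure)
  finally show ?thesis .
qed


fun chainL :: "real\<times>real \<Rightarrow> real \<Rightarrow> (real\<times>real) list \<Rightarrow> bool" where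
  "chainL p r [] = True"
| "chainL p r (x # xs) = (dist p x \<le> r \<and> chainL x (dist p x) xs)"

lemma meas_chainL:
  assumes f[measurable]: "f \<in> borel_measurable M" and g[measurable]: "g \<in> borel_measurable M"
    and H: "\<And>j. j \<in> set js \<Longrightarrow> (\<lambda>\<omega>. H \<omega> j) \<in> borel_measurable M"
  shows "Measurable.pred M (\<lambda>\<omega>. chainL (f \<omega>) (g \<omega>) (map (H \<omega>) js))"
  using f g H
proof (induction js arbitrary: f g)
  case Nil
  then show ?case by simp
next
  case (Cons j js)
  have [measurable]: "(\<lambda>\<omega>. H \<omega> j) \<in> borel_measurable M" using Cons by simp
  have [measurable]: "f \<in> borel_measurable M" "g \<in> borel_measurable M" using Cons by auto
  have "Measurable.pred M (\<lambda>\<omega>. chainL (H \<omega> j) (dist (f \<omega>) (H \<omega> j)) (map (H \<omega>) js))"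
    by (rule Cons.IH) (use Cons.prems in auto)
  then show ?case by simp
qed

definition Bd :: "real \<Rightarrow> nat \<Rightarrow> real \<Rightarrow> real" where
  "Bd L k r = pi^k * r^(2*k) / (fact k * L^(2*k))"

lemma UU_int:
  assumes L: "L > 0" and f[measurable]: "f \<in> borel_measurable borel"
  shows "(\<integral>\<^sup>+x. f x \<partial>UU L) \<le> (\<integral>\<^sup>+x. f x \<partial>lborel) / ennreal (L^2)"
proof -
  have "(\<integral>\<^sup>+x. f x \<partial>UU L) = (\<integral>\<^sup>+x. f x * indicator (square L) x \<partial>lborel) / emeasure lborel (square L)"
    unfolding UU_def by (rule nn_integral_uniform_measure) auto
  also have "\<dots> \<le> (\<integral>\<^sup>+x. f x \<partial>lborel) / ennreal (L^2)"
    using L by (auto simp: sq_meas intro!: divide_right_mono_ennreal nn_integral_mono mult_left_le simp: indicator_def)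
  finally show ?thesis .
qed

lemma chain_step:
  assumes L: "L > 0" and r: "r \<ge> 0"
  shows "(\<integral>\<^sup>+x. indicator (cball p r) x * ennreal (Bd L k (dist p x)) \<partial>UU L) \<le> ennreal (Bd L (Suc k) r)"
proof -
  define c where "c = pi^k / (fact k * L^(2*k))"
  have c0: "c \<ge> 0" unfolding c_def using L by simp
  have "(\<integral>\<^sup>+x. indicator (cball p r) x * ennreal (Bd L k (dist p x)) \<partial>UU L)
     \<le> (\<integral>\<^sup>+x. indicator (cball p r) x * ennreal (Bd L k (dist p x)) \<partial>lborel) / ennreal (L^2)"
    by (rule UU_int[OF L]) (unfold Bd_def, measurable)
  also have "(\<integral>\<^sup>+x. indicator (cball p r) x * ennreal (Bd L k (dist p x)) \<partial>lborel)
      = (\<integral>\<^sup>+x. ennreal c * (indicator (cball p r) x * ennreal (dist p x ^ (2*k))) \<partial>lborel)"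
    by (intro nn_integral_cong) (simp add: Bd_def c_def ennreal_mult'[symmetric] mult_ac)
  also have "\<dots> = ennreal c * ennreal (pi * r^(2*k+2) / Suc k)"
    by (subst nn_integral_cmult) (auto simp: radial_int[OF r])
  also have "\<dots> / ennreal (L^2) = ennreal (c * (pi * r^(2*k+2) / Suc k) / L^2)"
  proof -
    have x0: "pi * r^(2*k+2) / Suc k \<ge> 0" using r by simp
    have "ennreal c * ennreal (pi * r^(2*k+2) / Suc k) = ennreal (c * (pi * r^(2*k+2) / Suc k))"
      using ennreal_mult[OF c0 x0] by simp
    moreover have "ennreal (c * (pi * r^(2*k+2) / Suc k)) / ennreal (L^2) = ennreal (c * (pi * r^(2*k+2) / Suc k) / L^2)"
      using mult_nonneg_nonneg[OF c0 x0] L by (intro divide_ennreal) auto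
    ultimately show ?thesis by simp
  qed
  also have "c * (pi * r^(2*k+2) / Suc k) / L^2 = Bd L (Suc k) r"
    unfolding c_def Bd_def using L by (simp add: field_simps power_add power2_eq_square)
  finally show ?thesis by simp
qed


lemma comp_meas: "j \<in> I \<Longrightarrow> (\<lambda>X. X j) \<in> borel_measurable (PiM I (\<lambda>_. UU L))"
proof -
  assume "j \<in> I"
  then have "(\<lambda>X. X j) \<in> measurable (PiM I (\<lambda>_. UU L)) (UU L)" by (rule measurable_component_singleton)
  thus ?thesis by (simp add: measurable_cong_sets[OF refl sets_UU])
qed

lemma meas_chainL_PiM:
  assumes "set js \<subseteq> I"
  shows "{X \<in> space (PiM I (\<lambda>_. UU L)). chainL p r (map X js)} \<in> sets (PiM I (\<lambda>_. UU L))"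
proof -
  have "Measurable.pred (PiM I (\<lambda>_. UU L)) (\<lambda>X. chainL ((\<lambda>_. p) X) ((\<lambda>_. r) X) (map ((\<lambda>X. X) X) js))"
    by (rule meas_chainL) (use assms in \<open>auto intro!: comp_meas\<close>)
  thus ?thesis by (simp add: pred_def)
qed

lemma chain_bound:
  assumes L: "L > 0"
  shows "r \<ge> 0 \<Longrightarrow> distinct js \<Longrightarrow> set js \<subseteq> I \<Longrightarrow>
    emeasure (PiM I (\<lambda>_. UU L)) {X \<in> space (PiM I (\<lambda>_. UU L)). chainL p r (map X js)} \<le> ennreal (Bd L (length js) r)"
proof (induction js arbitrary: I p r)
  case Nil
  interpret prob_space "PiM I (\<lambda>_. UU L)" by (intro prob_space_PiM UU_prob L)
  show ?case by (simp add: Bd_def emeasure_space_1)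
next
  case (Cons i js)
  let ?P' = "PiM (I - {i}) (\<lambda>_. UU L)"
  let ?A = "{X \<in> space (PiM I (\<lambda>_. UU L)). chainL p r (map X (i # js))}"
  have i: "i \<in> I" using Cons by auto
  have "emeasure (PiM I (\<lambda>_. UU L)) ?A = (\<integral>\<^sup>+x. emeasure ?P' {X \<in> space ?P'. X(i:=x) \<in> ?A} \<partial>UU L)"
    by (rule PiM_split_emeasure[OF L i meas_chainL_PiM]) (use Cons in auto)
  also have "\<dots> \<le> (\<integral>\<^sup>+x. indicator (cball p r) x * ennreal (Bd L (length js) (dist p x)) \<partial>UU L)"
  proof (rule nn_integral_mono)
    fix x
    show "emeasure ?P' {X \<in> space ?P'. X(i:=x) \<in> ?A} \<le> indicator (cball p r) x * ennreal (Bd L (length js) (dist p x))"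
    proof (cases "dist p x \<le> r")
      case True
      have "emeasure ?P' {X \<in> space ?P'. X(i:=x) \<in> ?A} \<le> emeasure ?P' {X \<in> space ?P'. chainL x (dist p x) (map X js)}"
      proof (rule emeasure_mono)
        have "i \<notin> set js" using Cons.prems by auto
        thus "{X \<in> space ?P'. X(i:=x) \<in> ?A} \<subseteq> {X \<in> space ?P'. chainL x (dist p x) (map X js)}" by (auto simp: map_fun_upd)
        show "{X \<in> space ?P'. chainL x (dist p x) (map X js)} \<in> sets ?P'"
          by (rule meas_chainL_PiM) (use Cons.prems in auto)
      qed
      also have "\<dots> \<le> ennreal (Bd L (length js) (dist p x))"
        by (rule Cons.IH) (use Cons.prems in auto)
      finally show ?thesis using True by (simp add: mem_cball)
    next
      case False
      then have e: "{X \<in> space ?P'. X(i:=x) \<in> ?A} = {}" by auto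
      show ?thesis unfolding e by simp
    qed
  qed
  also have "\<dots> \<le> ennreal (Bd L (Suc (length js)) r)"
    by (rule chain_step[OF L Cons.prems(1)])
  finally show ?case by simp
qed

lemma chain_bound0:
  assumes L: "L > 0" and r: "r \<ge> 0" and d: "distinct (i # js)" and I: "set (i # js) \<subseteq> I"
  shows "emeasure (PiM I (\<lambda>_. UU L)) {X \<in> space (PiM I (\<lambda>_. UU L)). chainL (X i) r (map X js)}
     \<le> ennreal (Bd L (length js) r)"
proof -
  let ?P' = "PiM (I - {i}) (\<lambda>_. UU L)"
  let ?A = "{X \<in> space (PiM I (\<lambda>_. UU L)). chainL (X i) r (map X js)}"
  have i: "i \<in> I" using I by auto
  have mA: "?A \<in> sets (PiM I (\<lambda>_. UU L))"
  proof -
    have "Measurable.pred (PiM I (\<lambda>_. UU L)) (\<lambda>X. chainL ((\<lambda>X. X i) X) ((\<lambda>_. r) X) (map ((\<lambda>X. X) X) js))"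
      by (rule meas_chainL) (use I in \<open>auto intro!: comp_meas\<close>)
    thus ?thesis by (simp add: pred_def)
  qed
  have "emeasure (PiM I (\<lambda>_. UU L)) ?A = (\<integral>\<^sup>+x. emeasure ?P' {X \<in> space ?P'. X(i:=x) \<in> ?A} \<partial>UU L)"
    by (rule PiM_split_emeasure[OF L i mA])
  also have "\<dots> \<le> (\<integral>\<^sup>+x. ennreal (Bd L (length js) r) \<partial>UU L)"
  proof (rule nn_integral_mono)
    fix x
    have "emeasure ?P' {X \<in> space ?P'. X(i:=x) \<in> ?A} \<le> emeasure ?P' {X \<in> space ?P'. chainL x r (map X js)}"
    proof (rule emeasure_mono)
      have "i \<notin> set js" using d by auto
      thus "{X \<in> space ?P'. X(i:=x) \<in> ?A} \<subseteq> {X \<in> space ?P'. chainL x r (map X js)}" by (auto simp: map_fun_upd)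
      show "{X \<in> space ?P'. chainL x r (map X js)} \<in> sets ?P'"
        by (rule meas_chainL_PiM) (use I d in auto)
    qed
    also have "\<dots> \<le> ennreal (Bd L (length js) r)"
      by (rule chain_bound[OF L r]) (use I d in auto)
    finally show "emeasure ?P' {X \<in> space ?P'. X(i:=x) \<in> ?A} \<le> ennreal (Bd L (length js) r)" .
  qed
  also have "\<dots> = ennreal (Bd L (length js) r)"
  proof -
    interpret prob_space "UU L" by (rule UU_prob[OF L])
    have "emeasure (UU L) UNIV = 1" using emeasure_space_1 by simp
    thus ?thesis by simp
  qed
  finally show ?thesis .
qed



definition LS :: "nat \<Rightarrow> nat \<Rightarrow> nat list set" where
  "LS k N = {xs. length xs = k \<and> distinct xs \<and> set xs \<subseteq> {..<N}}"

lemma finite_LS: "finite (LS k N)"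
proof -
  have "LS k N \<subseteq> {xs. set xs \<subseteq> {..<N} \<and> length xs = k}" by (auto simp: LS_def)
  moreover have "finite {xs. set xs \<subseteq> {..<N} \<and> length xs = k}" by (rule finite_lists_length_eq) simp
  ultimately show ?thesis by (rule finite_subset)
qed

lemma card_LS: "real (card (LS k N)) = (if k \<le> N then fact N / fact (N - k) else 0)"
proof (cases "k \<le> N")
  case True
  have "card (LS k N) = \<Prod>{N - k + 1 .. N}"
    unfolding LS_def using card_lists_distinct_length_eq[of "{..<N}" k] True by simp
  also have "\<dots> = fact N div fact (N - k)"
    using fact_div_fact[of "N - k" N] True by simp
  finally have "real (card (LS k N)) = real (fact N div fact (N - k))" by simp
  also have "\<dots> = fact N / fact (N - k)"
    by (subst real_of_nat_div) (auto simp: fact_dvd)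
  finally show ?thesis using True by simp
next
  case False
  have "LS k N = {}"
  proof (rule ccontr)
    assume "LS k N \<noteq> {}"
    then obtain xs where "length xs = k" "distinct xs" "set xs \<subseteq> {..<N}" by (auto simp: LS_def)
    then have "k \<le> card {..<N}" using card_mono[of "{..<N}" "set xs"] distinct_card[of xs] by auto
    then show False using False by simp
  qed
  then show ?thesis using False by simp
qed

lemma poisson_moment:
  assumes lam: "lam > 0"
  shows "(\<integral>\<^sup>+N. ennreal (card (LS k N)) \<partial>measure_pmf (poisson_pmf lam)) = ennreal (lam^k)"
proof -
  define a where "a N = lam^N / fact N * exp (-lam) * (if k \<le> N then fact N / fact (N - k) else 0)" for N
  have a0: "a N \<ge> 0" for N unfolding a_def using lam by simp
  have shift: "a (M + k) = lam^k * exp (-lam) * (lam^M /\<^sub>R fact M)" for M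
    unfolding a_def by (simp add: power_add field_simps)
  have "(\<lambda>M. lam^k * exp (-lam) * (lam^M /\<^sub>R fact M)) sums (lam^k * exp (-lam) * exp lam)"
    by (intro sums_mult exp_converges)
  then have "(\<lambda>M. a (M + k)) sums (lam^k)"
    by (simp add: shift exp_minus field_simps)
  then have "a sums (lam^k + (\<Sum>i<k. a i))" by (simp add: sums_iff_shift)
  moreover have "(\<Sum>i<k. a i) = 0" by (auto simp: a_def intro!: sum.neutral)
  ultimately have as: "a sums lam^k" by simp
  have "(\<integral>\<^sup>+N. ennreal (card (LS k N)) \<partial>measure_pmf (poisson_pmf lam))
      = (\<integral>\<^sup>+N. ennreal (a N) \<partial>count_space UNIV)"
    unfolding nn_integral_measure_pmf using lam
    by (intro nn_integral_cong) (simp add: a_def card_LS ennreal_mult'[symmetric] del: of_nat_fact)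
  also have "\<dots> = ennreal (lam^k)"
    by (simp add: nn_integral_count_space_nat suminf_ennreal_eq[OF a0 as])
  finally show ?thesis .
qed

lemma chain_idx:
  fixes \<xi> :: "nat \<Rightarrow> real \<times> real"
  shows "(\<forall>j. a < j \<and> j < a + k \<longrightarrow> dist (\<xi> j) (\<xi> (j+1)) \<le> dist (\<xi> (j-1)) (\<xi> j)) \<Longrightarrow>
    (0 < k \<longrightarrow> dist (\<xi> a) (\<xi> (a+1)) \<le> r) \<Longrightarrow> chainL (\<xi> a) r (map \<xi> [Suc a..<Suc (a + k)])"
proof (induction k arbitrary: a r)
  case 0
  then show ?case by simp
next
  case (Suc k)
  have up: "[Suc a..<Suc (a + Suc k)] = Suc a # [Suc (Suc a)..<Suc (Suc a + k)]"
    by (simp add: upt_conv_Cons)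
  have "chainL (\<xi> (Suc a)) (dist (\<xi> a) (\<xi> (Suc a))) (map \<xi> [Suc (Suc a)..<Suc (Suc a + k)])"
  proof (rule Suc.IH)
    show "\<forall>j. Suc a < j \<and> j < Suc a + k \<longrightarrow> dist (\<xi> j) (\<xi> (j + 1)) \<le> dist (\<xi> (j - 1)) (\<xi> j)"
      using Suc.prems(1) by auto
    show "0 < k \<longrightarrow> dist (\<xi> (Suc a)) (\<xi> (Suc a + 1)) \<le> dist (\<xi> a) (\<xi> (Suc a))"
      using Suc.prems(1) spec[OF Suc.prems(1), of "Suc a"] by auto
  qed
  then show ?case using Suc.prems(2) unfolding up by (simp del: upt_Suc)
qed

lemma map_tl_nth:
  assumes "length xs = Suc n"
  shows "map X (tl xs) = map (\<lambda>j. X (xs ! j)) [1..<Suc n]"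
  by (rule nth_equalityI) (use assms in \<open>auto simp del: upt_Suc simp: nth_tl\<close>)

lemma snd_comp_meas[measurable]: "(\<lambda>\<omega>. snd \<omega> i) \<in> borel_measurable (PPP L)"
proof -
  have "PPP L = measure_pmf (poisson_pmf (L^2)) \<Otimes>\<^sub>M PiM UNIV (\<lambda>_. UU L)"
    unfolding PPP_def UU_def ..
  moreover have "(\<lambda>\<omega>. snd \<omega> i) \<in> borel_measurable (measure_pmf (poisson_pmf (L^2)) \<Otimes>\<^sub>M PiM UNIV (\<lambda>_. UU L))"
    using measurable_compose[OF measurable_snd comp_meas[of i UNIV L]] by simp
  ultimately show ?thesis by simp
qed

lemma fst_meas[measurable]: "fst \<in> measurable (PPP L) (count_space UNIV)"
proof -
  have "fst \<in> measurable (measure_pmf (poisson_pmf (L^2)) \<Otimes>\<^sub>M PiM UNIV (\<lambda>_. UU L)) (measure_pmf (poisson_pmf (L^2)))"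
    by (rule measurable_fst)
  then show ?thesis unfolding PPP_def UU_def
    by (simp add: measurable_cong_sets[OF refl sets_measure_pmf_count_space])
qed

theorem lemma5:
  fixes L d0 :: real and n :: nat
  assumes "L > 0" and "d0 > 0" and "n \<ge> 1"
  shows "decr_chain_event L d0 n \<in> sets (PPP L) \<and>
         measure (PPP L) (decr_chain_event L d0 n) \<le> L^2 * pi^n * d0^(2*n) / fact n"
proof -
  note L = assms(1)
  let ?Pois = "measure_pmf (poisson_pmf (L^2))"
  let ?P = "PiM UNIV (\<lambda>_::nat. UU L)"
  have PPP_eq: "PPP L = ?Pois \<Otimes>\<^sub>M ?P" unfolding PPP_def UU_def ..
  interpret P: prob_space ?P by (intro prob_space_PiM UU_prob L)
  define Dp where "Dp \<xi> = (inj_on \<xi> {..n} \<and> dist (\<xi> 0) (\<xi> 1) \<le> d0 \<and>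
      (\<forall>j. 1 \<le> j \<and> j < n \<longrightarrow> dist (\<xi> j) (\<xi> (j+1)) \<le> dist (\<xi> (j-1)) (\<xi> j)))" for \<xi> :: "nat \<Rightarrow> real \<times> real"
  have Dp_cong: "Dp \<xi> = Dp \<eta>" if eq: "\<And>j. j \<le> n \<Longrightarrow> \<xi> j = \<eta> j" for \<xi> \<eta>
  proof -
    have "inj_on \<xi> {..n} = inj_on \<eta> {..n}" by (rule inj_on_cong) (use eq in auto)
    moreover have "\<xi> 0 = \<eta> 0" "\<xi> 1 = \<eta> 1" using eq assms(3) by auto
    moreover have "\<forall>j. 1 \<le> j \<and> j < n \<longrightarrow> \<xi> j = \<eta> j \<and> \<xi> (j+1) = \<eta> (j+1) \<and> \<xi> (j-1) = \<eta> (j-1)"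
      using eq by auto
    ultimately show ?thesis unfolding Dp_def by (smt (verit, best))
  qed
  have ex_iff: "(\<exists>\<xi>. (\<forall>j\<le>n. \<xi> j \<in> X ` {..<N}) \<and> Dp \<xi>) \<longleftrightarrow> (\<exists>xs\<in>LS (Suc n) N. Dp (\<lambda>j. X (xs!j)))" for X N
  proof
    assume "\<exists>\<xi>. (\<forall>j\<le>n. \<xi> j \<in> X ` {..<N}) \<and> Dp \<xi>"
    then obtain \<xi> where \<xi>: "\<forall>j\<le>n. \<xi> j \<in> X ` {..<N}" "Dp \<xi>" by blast
    define idx where "idx j = (SOME i. i < N \<and> X i = \<xi> j)" for j
    have idx: "idx j < N \<and> X (idx j) = \<xi> j" if "j \<le> n" for j
    proof -
      from \<xi>(1) that have "\<xi> j \<in> X ` {..<N}" by auto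
      then obtain i where "i \<in> {..<N}" "\<xi> j = X i" by (rule imageE)
      then have "\<exists>i. i < N \<and> X i = \<xi> j" by auto
      from someI_ex[OF this] show ?thesis unfolding idx_def .
    qed
    define xs where "xs = map idx [0..<Suc n]"
    have nth: "xs ! j = idx j" if "j \<le> n" for j using that unfolding xs_def
      by (simp del: upt_Suc add: nth_map_upt)
    have inj: "inj_on \<xi> {..n}" using \<xi>(2) unfolding Dp_def by auto
    have "inj_on idx {0..<Suc n}"
    proof (rule inj_onI)
      fix a b assume ab: "a \<in> {0..<Suc n}" "b \<in> {0..<Suc n}" "idx a = idx b"
      then have "\<xi> a = \<xi> b" using idx[of a] idx[of b] by auto
      then show "a = b" using inj ab by (auto dest: inj_onD)
    qed
    then have "xs \<in> LS (Suc n) N"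
      unfolding LS_def xs_def using idx by (auto simp del: upt_Suc simp: distinct_map)
    moreover have "Dp (\<lambda>j. X (xs!j))"
    proof -
      have "Dp (\<lambda>j. X (xs!j)) = Dp \<xi>"
      proof (rule Dp_cong)
        fix j assume j: "j \<le> n"
        show "X (xs!j) = \<xi> j" using nth[OF j] idx[OF j] by simp
      qed
      then show ?thesis using \<xi>(2) by simp
    qed
    ultimately show "\<exists>xs\<in>LS (Suc n) N. Dp (\<lambda>j. X (xs!j))" by blast
  next
    assume "\<exists>xs\<in>LS (Suc n) N. Dp (\<lambda>j. X (xs!j))"
    then obtain xs where xs: "xs \<in> LS (Suc n) N" "Dp (\<lambda>j. X (xs!j))" by blast
    have "\<forall>j\<le>n. X (xs!j) \<in> X ` {..<N}"
    proof (intro allI impI)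
      fix j assume j: "j \<le> n"
      have len: "length xs = Suc n" and st: "set xs \<subseteq> {..<N}" using xs(1) by (simp_all add: LS_def)
      have "j < length xs" using len j by simp
      then have "xs ! j \<in> set xs" by (rule nth_mem)
      then have "xs ! j \<in> {..<N}" using st by blast
      then show "X (xs!j) \<in> X ` {..<N}" by (rule imageI)
    qed
    with xs(2) show "\<exists>\<xi>. (\<forall>j\<le>n. \<xi> j \<in> X ` {..<N}) \<and> Dp \<xi>"
      by (intro exI[of _ "\<lambda>j. X (xs!j)"]) simp
  qed
  have ev_eq: "decr_chain_event L d0 n = {\<omega> \<in> space (PPP L). \<exists>xs\<in>LS (Suc n) (fst \<omega>). Dp (\<lambda>j. snd \<omega> (xs!j))}"
  proof -
    have "\<And>\<omega>. (\<exists>\<xi>. (\<forall>j\<le>n. \<xi> j \<in> PPP_points \<omega>) \<and> Dp \<xi>) \<longleftrightarrow> (\<exists>xs\<in>LS (Suc n) (fst \<omega>). Dp (\<lambda>j. snd \<omega> (xs!j)))"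
      unfolding PPP_points_def by (rule ex_iff)
    then show ?thesis unfolding decr_chain_event_def Dp_def by blast
  qed
  have Dp_alt: "Dp \<xi> = ((\<forall>a\<in>{..n}. \<forall>b\<in>{..n}. dist (\<xi> a) (\<xi> b) \<le> 0 \<longrightarrow> a = b) \<and> dist (\<xi> 0) (\<xi> 1) \<le> d0 \<and>
      (\<forall>j. 1 \<le> j \<and> j < n \<longrightarrow> dist (\<xi> j) (\<xi> (j+1)) \<le> dist (\<xi> (j-1)) (\<xi> j)))" for \<xi>
    unfolding Dp_def inj_on_def by (simp add: dist_le_zero_iff)
  have mD: "{\<omega> \<in> space (PPP L). fst \<omega> = N \<and> Dp (\<lambda>j. snd \<omega> (xs!j))} \<in> sets (PPP L)" for N xs
    unfolding Dp_alt by measurable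
  have ev_UN: "decr_chain_event L d0 n = (\<Union>N. \<Union>xs\<in>LS (Suc n) N. {\<omega> \<in> space (PPP L). fst \<omega> = N \<and> Dp (\<lambda>j. snd \<omega> (xs!j))})"
    unfolding ev_eq by auto
  have meas: "decr_chain_event L d0 n \<in> sets (PPP L)"
    unfolding ev_UN using finite_LS mD by (intro sets.countable_UN' sets.finite_UN) auto
  define c where "c = Bd L n d0"
  have c0: "c \<ge> 0" unfolding c_def Bd_def using L by simp
  have slice: "emeasure ?P (Pair N -` decr_chain_event L d0 n) \<le> of_nat (card (LS (Suc n) N)) * ennreal c" for N
  proof -
    define B where "B xs = {X \<in> space ?P. chainL (X (hd xs)) d0 (map X (tl xs))}" for xs
    have Bm: "B xs \<in> sets ?P" for xs
    proof -
      have "Measurable.pred ?P (\<lambda>X. chainL ((\<lambda>X. X (hd xs)) X) ((\<lambda>_. d0) X) (map ((\<lambda>X. X) X) (tl xs)))"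
        by (rule meas_chainL) (auto intro!: comp_meas)
      thus ?thesis unfolding B_def by (simp add: pred_def)
    qed
    have sub: "Pair N -` decr_chain_event L d0 n \<subseteq> (\<Union>xs\<in>LS (Suc n) N. B xs)"
    proof
      fix X assume "X \<in> Pair N -` decr_chain_event L d0 n"
      then have X: "(N, X) \<in> space (PPP L)" "\<exists>xs\<in>LS (Suc n) N. Dp (\<lambda>j. X (xs!j))"
        unfolding ev_eq by auto
      then obtain xs where xs: "xs \<in> LS (Suc n) N" "Dp (\<lambda>j. X (xs!j))" by auto
      have len: "length xs = Suc n" using xs(1) by (simp add: LS_def)
      have "chainL ((\<lambda>j. X (xs!j)) 0) d0 (map (\<lambda>j. X (xs!j)) [Suc 0..<Suc (0 + n)])"
        by (rule chain_idx) (use xs(2) assms(3) in \<open>auto simp: Dp_def\<close>)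
      moreover have "hd xs = xs ! 0" using len by (cases xs) auto
      ultimately have "chainL (X (hd xs)) d0 (map X (tl xs))"
        using map_tl_nth[OF len, of X] by simp
      moreover have "X \<in> space ?P" using X(1) by (simp add: PPP_eq space_pair_measure)
      ultimately show "X \<in> (\<Union>xs\<in>LS (Suc n) N. B xs)" using xs(1) unfolding B_def by blast
    qed
    have "emeasure ?P (Pair N -` decr_chain_event L d0 n) \<le> emeasure ?P (\<Union>xs\<in>LS (Suc n) N. B xs)"
      by (rule emeasure_mono[OF sub]) (use finite_LS Bm in auto)
    also have "\<dots> \<le> (\<Sum>xs\<in>LS (Suc n) N. emeasure ?P (B xs))"
      by (rule emeasure_subadditive_finite) (use finite_LS Bm in auto)
    also have "\<dots> \<le> (\<Sum>xs\<in>LS (Suc n) N. ennreal c)"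
    proof (rule sum_mono)
      fix xs assume xs: "xs \<in> LS (Suc n) N"
      then have len: "length xs = Suc n" and d: "distinct xs" by (auto simp: LS_def)
      then have xs_eq: "hd xs # tl xs = xs" by (cases xs) auto
      have "emeasure ?P (B xs) \<le> ennreal (Bd L (length (tl xs)) d0)"
        unfolding B_def by (rule chain_bound0[OF L]) (use assms(2) d xs_eq in auto)
      then show "emeasure ?P (B xs) \<le> ennreal c" using len by (simp add: c_def)
    qed
    also have "\<dots> = of_nat (card (LS (Suc n) N)) * ennreal c" by simp
    finally show ?thesis .
  qed
  have "emeasure (PPP L) (decr_chain_event L d0 n) = (\<integral>\<^sup>+N. emeasure ?P (Pair N -` decr_chain_event L d0 n) \<partial>?Pois)"
    unfolding PPP_eq by (rule P.emeasure_pair_measure_alt) (use meas in \<open>simp add: PPP_eq\<close>)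
  also have "\<dots> \<le> (\<integral>\<^sup>+N. ennreal (card (LS (Suc n) N)) * ennreal c \<partial>?Pois)"
    by (rule nn_integral_mono) (use slice in \<open>simp add: ennreal_of_nat_eq_real_of_nat\<close>)
  also have "\<dots> = (\<integral>\<^sup>+N. ennreal (card (LS (Suc n) N)) \<partial>?Pois) * ennreal c"
    by (rule nn_integral_multc) simp
  also have "\<dots> = ennreal ((L^2)^(Suc n)) * ennreal c"
    using L by (simp add: poisson_moment)
  also have "\<dots> = ennreal ((L^2)^(Suc n) * c)"
    using c0 by (simp add: ennreal_mult)
  also have "(L^2)^(Suc n) * c = L^2 * pi^n * d0^(2*n) / fact n"
    unfolding c_def Bd_def using L by (simp add: field_simps power_mult[symmetric] power_add)
  finally have em: "emeasure (PPP L) (decr_chain_event L d0 n) \<le> ennreal (L^2 * pi^n * d0^(2*n) / fact n)" .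
  have "measure (PPP L) (decr_chain_event L d0 n) \<le> L^2 * pi^n * d0^(2*n) / fact n"
    unfolding measure_def using em by (simp add: enn2real_leI)
  with meas show ?thesis by blast
qed

end
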